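(* Let $\mathcal{F}$ and $\mathcal{G}$ be uniform sheaves over $\mathcal{B}$, let $\mathcal{F}'\subset\mathcal{F}$ be a dense subsheaf, and suppose $\mathcal{G}$ is complete. Then every uniformly continuous morphism $f:\mathcal{F}'\to\mathcal{G}$ extends uniquely to a uniformly continuous morphism $\tilde f:\mathcal{F}\to\mathcal{G}$.
   Context: $\mathcal{W}$ is a quasi-separated (fs log) adic space locally of finite type over a finite extension $K$ of $\mathbb{Q}_p$, and $\mathcal{B}$ is a basis of the big pro-Kummer-étale site $(Rig/\mathcal{W})_{proket}$ consisting of log affinoid perfectoid objects. A Hausdorff topological sheaf on $\mathcal{B}$ is a functor $\mathcal{B}^{op}\to$ (Hausdorff topological spaces) such that $\mathcal{F}(U\sqcup V)=\mathcal{F}(U)\times\mathcal{F}(V)$ and for every truncated finite hypercover $\{V^2_j\}\to\{V^1_i\}\to V$ in $\mathcal{B}$ the diagram $\mathcal{F}(V)\to\prod_i\mathcal{F}(V^1_i)\rightrightarrows\prod_j\mathcal{F}(V^2_j)$ is an equalizer of topological spaces. It is a uniform sheaf if all $\mathcal{F}(V)$ are uniform spaces, complete if all $\mathcal{F}(V)$ are complete; a morphism is uniformly continuous if each $f(V)$ is; a subsheaf $\mathcal{F}'\subset\mathcal{F}$ is dense if $\mathcal{F}'(V)$ is dense in $\mathcal{F}(V)$ for all $V\in\mathcal{B}$. *)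

theory Defs
  imports "HOL-Analysis.Analysis"
begin

definition uniformity_on :: "'a set \<Rightarrow> ('a \<times> 'a) set set \<Rightarrow> bool" where
  "uniformity_on X \<Phi> \<longleftrightarrow>
     (\<forall>E\<in>\<Phi>. E \<subseteq> X \<times> X) \<and>
     X \<times> X \<in> \<Phi> \<and>
     (\<forall>E\<in>\<Phi>. \<forall>E'. E \<subseteq> E' \<and> E' \<subseteq> X \<times> X \<longrightarrow> E' \<in> \<Phi>) \<and>
     (\<forall>E\<in>\<Phi>. \<forall>E'\<in>\<Phi>. E \<inter> E' \<in> \<Phi>) \<and>
     (\<forall>E\<in>\<Phi>. Id_on X \<subseteq> E) \<and>
     (\<forall>E\<in>\<Phi>. E\<inverse> \<in> \<Phi>) \<and>
     (\<forall>E\<in>\<Phi>. \<exists>D\<in>\<Phi>. D O D \<subseteq> E)"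

definition uniform_hausdorff :: "'a set \<Rightarrow> ('a \<times> 'a) set set \<Rightarrow> bool" where
  "uniform_hausdorff X \<Phi> \<longleftrightarrow>
     (\<forall>x\<in>X. \<forall>y\<in>X. (\<forall>E\<in>\<Phi>. (x, y) \<in> E) \<longrightarrow> x = y)"

definition uniform_topology :: "'a set \<Rightarrow> ('a \<times> 'a) set set \<Rightarrow> 'a topology" where
  "uniform_topology X \<Phi> =
     topology (\<lambda>U. U \<subseteq> X \<and> (\<forall>x\<in>U. \<exists>E\<in>\<Phi>. E `` {x} \<subseteq> U))"

definition unif_continuous ::
  "'a set \<Rightarrow> ('a \<times> 'a) set set \<Rightarrow> 'b set \<Rightarrow> ('b \<times> 'b) set set \<Rightarrow> ('a \<Rightarrow> 'b) \<Rightarrow> bool" where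
  "unif_continuous X \<Phi> Y \<Psi> f \<longleftrightarrow>
     f \<in> X \<rightarrow> Y \<and> (\<forall>E\<in>\<Psi>. \<exists>D\<in>\<Phi>. \<forall>(x, y)\<in>D. (f x, f y) \<in> E)"

definition unif_complete :: "'a set \<Rightarrow> ('a \<times> 'a) set set \<Rightarrow> bool" where
  "unif_complete X \<Phi> \<longleftrightarrow>
     (\<forall>F :: 'a filter. F \<noteq> bot \<and> eventually (\<lambda>x. x \<in> X) F \<and>
        (\<forall>E\<in>\<Phi>. \<exists>P. eventually P F \<and> (\<forall>x y. P x \<and> P y \<longrightarrow> (x, y) \<in> E))
      \<longrightarrow> (\<exists>x\<in>X. \<forall>E\<in>\<Phi>. eventually (\<lambda>y. (x, y) \<in> E) F))"

definition subspace_uniformity :: "'a set \<Rightarrow> ('a \<times> 'a) set set \<Rightarrow> ('a \<times> 'a) set set" where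
  "subspace_uniformity Y \<Phi> = (\<lambda>E. E \<inter> (Y \<times> Y)) ` \<Phi>"

section \<open>The basis B, abstractly: a category with chosen disjoint unions and a
  chosen class of truncated finite hypercovers\<close>

text \<open>A truncated finite hypercover  {V2_j} \<rightarrow> {V1_i} \<rightarrow> V : the maps u1 i : V1 i \<rightarrow> V
  (i < n1) and, for j < n2, two maps pr1 j : V2 j \<rightarrow> V1 (ix1 j), pr2 j : V2 j \<rightarrow> V1 (ix2 j)
  over V.\<close>
record ('o, 'm) hcover =
  hc_base :: 'o
  hc_n1 :: nat
  hc_V1 :: "nat \<Rightarrow> 'o"
  hc_u1 :: "nat \<Rightarrow> 'm"
  hc_n2 :: nat
  hc_V2 :: "nat \<Rightarrow> 'o"
  hc_ix1 :: "nat \<Rightarrow> nat"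
  hc_ix2 :: "nat \<Rightarrow> nat"
  hc_pr1 :: "nat \<Rightarrow> 'm"
  hc_pr2 :: "nat \<Rightarrow> 'm"

record ('o, 'm) site_basis =
  sb_obj :: "'o set"
  sb_mor :: "'m set"
  sb_dom :: "'m \<Rightarrow> 'o"
  sb_cod :: "'m \<Rightarrow> 'o"
  sb_comp :: "'m \<Rightarrow> 'm \<Rightarrow> 'm"   (* sb_comp g f = g \<circ> f *)
  sb_id :: "'o \<Rightarrow> 'm"
  sb_dunion :: "'o \<Rightarrow> 'o \<Rightarrow> 'o"
  sb_inl :: "'o \<Rightarrow> 'o \<Rightarrow> 'm"
  sb_inr :: "'o \<Rightarrow> 'o \<Rightarrow> 'm"
  sb_hcovers :: "('o, 'm) hcover set"

definition is_mor :: "('o, 'm) site_basis \<Rightarrow> 'm \<Rightarrow> 'o \<Rightarrow> 'o \<Rightarrow> bool" where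
  "is_mor B f U V \<longleftrightarrow> f \<in> sb_mor B \<and> sb_dom B f = U \<and> sb_cod B f = V"

definition wf_site_basis :: "('o, 'm) site_basis \<Rightarrow> bool" where
  "wf_site_basis B \<longleftrightarrow>
     (\<forall>f\<in>sb_mor B. sb_dom B f \<in> sb_obj B \<and> sb_cod B f \<in> sb_obj B) \<and>
     (\<forall>U\<in>sb_obj B. is_mor B (sb_id B U) U U) \<and>
     (\<forall>f\<in>sb_mor B. \<forall>g\<in>sb_mor B. sb_cod B f = sb_dom B g \<longrightarrow>
         is_mor B (sb_comp B g f) (sb_dom B f) (sb_cod B g)) \<and>
     (\<forall>f\<in>sb_mor B. sb_comp B (sb_id B (sb_cod B f)) f = f \<and> sb_comp B f (sb_id B (sb_dom B f)) = f) \<and>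
     (\<forall>f\<in>sb_mor B. \<forall>g\<in>sb_mor B. \<forall>h\<in>sb_mor B. sb_cod B f = sb_dom B g \<and> sb_cod B g = sb_dom B h \<longrightarrow>
         sb_comp B h (sb_comp B g f) = sb_comp B (sb_comp B h g) f) \<and>
     (\<forall>U\<in>sb_obj B. \<forall>V\<in>sb_obj B. sb_dunion B U V \<in> sb_obj B \<and>
         is_mor B (sb_inl B U V) U (sb_dunion B U V) \<and> is_mor B (sb_inr B U V) V (sb_dunion B U V)) \<and>
     (\<forall>H\<in>sb_hcovers B. hc_base H \<in> sb_obj B \<and>
         (\<forall>i<hc_n1 H. is_mor B (hc_u1 H i) (hc_V1 H i) (hc_base H)) \<and>
         (\<forall>j<hc_n2 H. hc_ix1 H j < hc_n1 H \<and> hc_ix2 H j < hc_n1 H \<and>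
            is_mor B (hc_pr1 H j) (hc_V2 H j) (hc_V1 H (hc_ix1 H j)) \<and>
            is_mor B (hc_pr2 H j) (hc_V2 H j) (hc_V1 H (hc_ix2 H j)) \<and>
            sb_comp B (hc_u1 H (hc_ix1 H j)) (hc_pr1 H j) = sb_comp B (hc_u1 H (hc_ix2 H j)) (hc_pr2 H j)))"

text \<open>A presheaf of uniform spaces: sections F(V) = carrier, with uniformity and
  restriction maps  res f : F(cod f) \<rightarrow> F(dom f).\<close>
record ('m, 'o, 'a) upresheaf =
  ps_carr :: "'o \<Rightarrow> 'a set"
  ps_unif :: "'o \<Rightarrow> ('a \<times> 'a) set set"
  ps_res :: "'m \<Rightarrow> 'a \<Rightarrow> 'a"

definition ps_top :: "('m, 'o, 'a) upresheaf \<Rightarrow> 'o \<Rightarrow> 'a topology" where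
  "ps_top F V = uniform_topology (ps_carr F V) (ps_unif F V)"

definition uniform_sheaf :: "('o, 'm) site_basis \<Rightarrow> ('m, 'o, 'a) upresheaf \<Rightarrow> bool" where
  "uniform_sheaf B F \<longleftrightarrow>
     (\<forall>V\<in>sb_obj B. uniformity_on (ps_carr F V) (ps_unif F V) \<and>
                     uniform_hausdorff (ps_carr F V) (ps_unif F V)) \<and>
     (\<forall>f\<in>sb_mor B. continuous_map (ps_top F (sb_cod B f)) (ps_top F (sb_dom B f)) (ps_res F f)) \<and>
     (\<forall>U\<in>sb_obj B. \<forall>x\<in>ps_carr F U. ps_res F (sb_id B U) x = x) \<and>
     (\<forall>f\<in>sb_mor B. \<forall>g\<in>sb_mor B. sb_cod B f = sb_dom B g \<longrightarrow>
        (\<forall>x\<in>ps_carr F (sb_cod B g). ps_res F (sb_comp B g f) x = ps_res F f (ps_res F g x))) \<and>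
     (\<forall>U\<in>sb_obj B. \<forall>V\<in>sb_obj B.
        homeomorphic_map (ps_top F (sb_dunion B U V)) (prod_topology (ps_top F U) (ps_top F V))
          (\<lambda>x. (ps_res F (sb_inl B U V) x, ps_res F (sb_inr B U V) x))) \<and>
     (\<forall>H\<in>sb_hcovers B.
        homeomorphic_map (ps_top F (hc_base H))
          (subtopology (product_topology (\<lambda>i. ps_top F (hc_V1 H i)) {..<hc_n1 H})
             {s. \<forall>j<hc_n2 H. ps_res F (hc_pr1 H j) (s (hc_ix1 H j)) = ps_res F (hc_pr2 H j) (s (hc_ix2 H j))})
          (\<lambda>x. restrict (\<lambda>i. ps_res F (hc_u1 H i) x) {..<hc_n1 H}))"

definition complete_sheaf :: "('o, 'm) site_basis \<Rightarrow> ('m, 'o, 'a) upresheaf \<Rightarrow> bool" where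
  "complete_sheaf B F \<longleftrightarrow> (\<forall>V\<in>sb_obj B. unif_complete (ps_carr F V) (ps_unif F V))"

definition dense_subsheaf :: "('o, 'm) site_basis \<Rightarrow> ('m, 'o, 'a) upresheaf \<Rightarrow> ('m, 'o, 'a) upresheaf \<Rightarrow> bool" where
  "dense_subsheaf B F' F \<longleftrightarrow>
     uniform_sheaf B F' \<and>
     (\<forall>V\<in>sb_obj B. ps_carr F' V \<subseteq> ps_carr F V \<and>
        ps_unif F' V = subspace_uniformity (ps_carr F' V) (ps_unif F V) \<and>
        ps_top F V closure_of ps_carr F' V = ps_carr F V) \<and>
     (\<forall>f\<in>sb_mor B. \<forall>x\<in>ps_carr F' (sb_cod B f). ps_res F' f x = ps_res F f x)"

definition unif_cont_morphism ::
  "('o, 'm) site_basis \<Rightarrow> ('m, 'o, 'a) upresheaf \<Rightarrow> ('m, 'o, 'b) upresheaf \<Rightarrow> ('o \<Rightarrow> 'a \<Rightarrow> 'b) \<Rightarrow> bool" where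
  "unif_cont_morphism B F G \<phi> \<longleftrightarrow>
     (\<forall>V\<in>sb_obj B. unif_continuous (ps_carr F V) (ps_unif F V) (ps_carr G V) (ps_unif G V) (\<phi> V)) \<and>
     (\<forall>f\<in>sb_mor B. \<forall>x\<in>ps_carr F (sb_cod B f).
        \<phi> (sb_dom B f) (ps_res F f x) = ps_res G f (\<phi> (sb_cod B f) x))"

end

theory Submission
  imports Defs
begin

lemma u_conjs:
  assumes "uniformity_on X \<Phi>"
  shows "\<forall>E\<in>\<Phi>. E \<subseteq> X \<times> X" "X \<times> X \<in> \<Phi>"
    "\<forall>E\<in>\<Phi>. \<forall>E'\<in>\<Phi>. E \<inter> E' \<in> \<Phi>"
    "\<forall>E\<in>\<Phi>. Id_on X \<subseteq> E" "\<forall>E\<in>\<Phi>. E\<inverse> \<in> \<Phi>" "\<forall>E\<in>\<Phi>. \<exists>D\<in>\<Phi>. D O D \<subseteq> E"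
proof -
  note A = assms[unfolded uniformity_on_def]
  show "\<forall>E\<in>\<Phi>. E \<subseteq> X \<times> X" using A by (elim conjE)
  show "X \<times> X \<in> \<Phi>" using A by (elim conjE)
  show "\<forall>E\<in>\<Phi>. \<forall>E'\<in>\<Phi>. E \<inter> E' \<in> \<Phi>" using A by (elim conjE)
  show "\<forall>E\<in>\<Phi>. Id_on X \<subseteq> E" using A by (elim conjE)
  show "\<forall>E\<in>\<Phi>. E\<inverse> \<in> \<Phi>" using A by (elim conjE)
  show "\<forall>E\<in>\<Phi>. \<exists>D\<in>\<Phi>. D O D \<subseteq> E" using A by (elim conjE)
qed

lemma u_sub: "uniformity_on X \<Phi> \<Longrightarrow> E \<in> \<Phi> \<Longrightarrow> E \<subseteq> X \<times> X"
  by (drule u_conjs(1)) (erule bspec)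
lemma u_top: "uniformity_on X \<Phi> \<Longrightarrow> X \<times> X \<in> \<Phi>"
  by (rule u_conjs(2))
lemma u_int: "uniformity_on X \<Phi> \<Longrightarrow> E \<in> \<Phi> \<Longrightarrow> E' \<in> \<Phi> \<Longrightarrow> E \<inter> E' \<in> \<Phi>"
  by (drule u_conjs(3)) (drule bspec, assumption, erule bspec)
lemma u_refl: "uniformity_on X \<Phi> \<Longrightarrow> E \<in> \<Phi> \<Longrightarrow> x \<in> X \<Longrightarrow> (x, x) \<in> E"
proof -
  assume "uniformity_on X \<Phi>" "E \<in> \<Phi>" "x \<in> X"
  then have "Id_on X \<subseteq> E" by (drule_tac u_conjs(4)) (erule bspec)
  moreover have "(x, x) \<in> Id_on X" using \<open>x \<in> X\<close> by (rule Id_onI)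
  ultimately show "(x, x) \<in> E" by (rule subsetD)
qed
lemma u_conv: "uniformity_on X \<Phi> \<Longrightarrow> E \<in> \<Phi> \<Longrightarrow> E\<inverse> \<in> \<Phi>"
  by (drule u_conjs(5)) (erule bspec)
lemma u_half: "uniformity_on X \<Phi> \<Longrightarrow> E \<in> \<Phi> \<Longrightarrow> \<exists>D\<in>\<Phi>. D O D \<subseteq> E"
  by (drule u_conjs(6)) (erule bspec)

lemma u_half_sym:
  assumes "uniformity_on X \<Phi>" "E \<in> \<Phi>"
  shows "\<exists>D\<in>\<Phi>. (\<forall>a b c. (a,b) \<in> D \<longrightarrow> (b,c) \<in> D \<longrightarrow> (a,c) \<in> E) \<and> (\<forall>a b. (a,b) \<in> D \<longrightarrow> (b,a) \<in> D)"
proof -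
  obtain D0 where D0: "D0 \<in> \<Phi>" "D0 O D0 \<subseteq> E" using u_half[OF assms] by blast
  have "D0 \<inter> D0\<inverse> \<in> \<Phi>" using u_int[OF assms(1) D0(1) u_conv[OF assms(1) D0(1)]] .
  moreover have "(a,c) \<in> E" if "(a,b) \<in> D0 \<inter> D0\<inverse>" "(b,c) \<in> D0 \<inter> D0\<inverse>" for a b c
  proof -
    have "(a,b) \<in> D0" "(b,c) \<in> D0" using that by auto
    then have "(a,c) \<in> D0 O D0" by (rule relcompI)
    then show ?thesis using D0(2) by (rule subsetD[rotated])
  qed
  moreover have "(b,a) \<in> D0 \<inter> D0\<inverse>" if "(a,b) \<in> D0 \<inter> D0\<inverse>" for a b
    using that by auto
  ultimately show ?thesis by blast
qed

lemma u_third_sym: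
  assumes "uniformity_on X \<Phi>" "E \<in> \<Phi>"
  shows "\<exists>D\<in>\<Phi>. (\<forall>a b c d. (a,b) \<in> D \<longrightarrow> (b,c) \<in> D \<longrightarrow> (c,d) \<in> D \<longrightarrow> (a,d) \<in> E) \<and> (\<forall>a b. (a,b) \<in> D \<longrightarrow> (b,a) \<in> D)"
proof -
  obtain D2 where D2: "D2 \<in> \<Phi>" "\<forall>a b c. (a,b) \<in> D2 \<longrightarrow> (b,c) \<in> D2 \<longrightarrow> (a,c) \<in> E"
      "\<forall>a b. (a,b) \<in> D2 \<longrightarrow> (b,a) \<in> D2"
    using u_half_sym[OF assms] by blast
  obtain D1 where D1: "D1 \<in> \<Phi>" "\<forall>a b c. (a,b) \<in> D1 \<longrightarrow> (b,c) \<in> D1 \<longrightarrow> (a,c) \<in> D2"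
      "\<forall>a b. (a,b) \<in> D1 \<longrightarrow> (b,a) \<in> D1"
    using u_half_sym[OF assms(1) D2(1)] by blast
  have "D1 \<inter> D2 \<in> \<Phi>" using u_int[OF assms(1) D1(1) D2(1)] .
  moreover have "(a,d) \<in> E" if "(a,b) \<in> D1 \<inter> D2" "(b,c) \<in> D1 \<inter> D2" "(c,d) \<in> D1 \<inter> D2" for a b c d
  proof -
    have "(a,c) \<in> D2" using D1(2) that(1,2) by blast
    then show ?thesis using D2(2) that(3) by blast
  qed
  moreover have "(b,a) \<in> D1 \<inter> D2" if "(a,b) \<in> D1 \<inter> D2" for a b using D1(3) D2(3) that by blast
  ultimately show ?thesis by blast
qed

lemma ut_open:
  assumes "uniformity_on X \<Phi>"
  shows "openin (uniform_topology X \<Phi>) U \<longleftrightarrow> U \<subseteq> X \<and> (\<forall>x\<in>U. \<exists>E\<in>\<Phi>. E `` {x} \<subseteq> U)"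
proof -
  have "istopology (\<lambda>U. U \<subseteq> X \<and> (\<forall>x\<in>U. \<exists>E\<in>\<Phi>. E `` {x} \<subseteq> U))"
    unfolding istopology_def
  proof (rule conjI; intro allI impI)
    fix S T assume S: "S \<subseteq> X \<and> (\<forall>x\<in>S. \<exists>E\<in>\<Phi>. E `` {x} \<subseteq> S)"
      and T: "T \<subseteq> X \<and> (\<forall>x\<in>T. \<exists>E\<in>\<Phi>. E `` {x} \<subseteq> T)"
    show "S \<inter> T \<subseteq> X \<and> (\<forall>x\<in>S \<inter> T. \<exists>E\<in>\<Phi>. E `` {x} \<subseteq> S \<inter> T)"
    proof (intro conjI ballI)
      fix x assume "x \<in> S \<inter> T"
      then obtain E1 E2 where "E1 \<in> \<Phi>" "E1 `` {x} \<subseteq> S" "E2 \<in> \<Phi>" "E2 `` {x} \<subseteq> T"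
        using S T by blast
      then show "\<exists>E\<in>\<Phi>. E `` {x} \<subseteq> S \<inter> T"
        using u_int[OF assms] by (intro bexI[of _ "E1 \<inter> E2"]) auto
    qed (use S in blast)
  next
    fix K assume K: "\<forall>S\<in>K. S \<subseteq> X \<and> (\<forall>x\<in>S. \<exists>E\<in>\<Phi>. E `` {x} \<subseteq> S)"
    show "\<Union> K \<subseteq> X \<and> (\<forall>x\<in>\<Union> K. \<exists>E\<in>\<Phi>. E `` {x} \<subseteq> \<Union> K)"
    proof (intro conjI ballI)
      fix x assume "x \<in> \<Union>K"
      then obtain S where "S \<in> K" "x \<in> S" by blast
      then obtain E where "E \<in> \<Phi>" "E `` {x} \<subseteq> S" using K by blast
      then show "\<exists>E\<in>\<Phi>. E `` {x} \<subseteq> \<Union> K" using \<open>S \<in> K\<close> by blast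
    qed (use K in blast)
  qed
  then show ?thesis unfolding uniform_topology_def by simp
qed

lemma ut_topspace:
  assumes "uniformity_on X \<Phi>"
  shows "topspace (uniform_topology X \<Phi>) = X"
proof -
  have "openin (uniform_topology X \<Phi>) X"
    using u_top[OF assms] u_sub[OF assms] by (subst ut_open[OF assms]) blast
  then have "X \<subseteq> topspace (uniform_topology X \<Phi>)" by (simp add: openin_subset)
  moreover have "topspace (uniform_topology X \<Phi>) \<subseteq> X"
    unfolding topspace_def using ut_open[OF assms] by blast
  ultimately show ?thesis by blast
qed

lemma ut_nbhd:
  assumes "uniformity_on X \<Phi>" "x \<in> X" "E \<in> \<Phi>"
  shows "\<exists>U. openin (uniform_topology X \<Phi>) U \<and> x \<in> U \<and> U \<subseteq> E `` {x}"
proof -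
  define U where "U = {y\<in>X. \<exists>D\<in>\<Phi>. D `` {y} \<subseteq> E `` {x}}"
  have "openin (uniform_topology X \<Phi>) U"
    unfolding ut_open[OF assms(1)]
  proof (intro conjI ballI)
    fix y assume "y \<in> U"
    then obtain D where D: "D \<in> \<Phi>" "D `` {y} \<subseteq> E `` {x}" unfolding U_def by blast
    obtain D' where D': "D' \<in> \<Phi>" "D' O D' \<subseteq> D" using u_half[OF assms(1) D(1)] by blast
    have "D' `` {y} \<subseteq> U"
    proof
      fix z assume z: "z \<in> D' `` {y}"
      then have "z \<in> X" using u_sub[OF assms(1) D'(1)] by blast
      moreover have "D' `` {z} \<subseteq> E `` {x}" using z D' D(2) by blast
      ultimately show "z \<in> U" unfolding U_def using D'(1) by blast
    qed
    then show "\<exists>E\<in>\<Phi>. E `` {y} \<subseteq> U" using D'(1) by blast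
  qed (auto simp: U_def)
  moreover have "x \<in> U" unfolding U_def using assms by blast
  moreover have "U \<subseteq> E `` {x}"
    unfolding U_def using u_refl[OF assms(1)] by blast
  ultimately show ?thesis by blast
qed

lemma ut_dense:
  assumes "uniformity_on X \<Phi>" "uniform_topology X \<Phi> closure_of S = X" "x \<in> X" "E \<in> \<Phi>"
  shows "\<exists>s\<in>S. (x, s) \<in> E"
proof -
  obtain U where U: "openin (uniform_topology X \<Phi>) U" "x \<in> U" "U \<subseteq> E `` {x}"
    using ut_nbhd[OF assms(1,3,4)] by blast
  have "x \<in> uniform_topology X \<Phi> closure_of S" using assms by simp
  then obtain y where "y \<in> S" "y \<in> U" using U unfolding in_closure_of by blast
  then show ?thesis using U by blast
qed

definition pcont where
  "pcont X \<Phi> Y \<Psi> a \<longleftrightarrow> a \<in> X \<rightarrow> Y \<and> (\<forall>x\<in>X. \<forall>E\<in>\<Psi>. \<exists>D\<in>\<Phi>. \<forall>y\<in>X. (x, y) \<in> D \<longrightarrow> (a x, a y) \<in> E)"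

lemma ut_cont:
  assumes "uniformity_on X \<Phi>" "uniformity_on Y \<Psi>"
    "continuous_map (uniform_topology X \<Phi>) (uniform_topology Y \<Psi>) a"
  shows "pcont X \<Phi> Y \<Psi> a"
  unfolding pcont_def
proof (intro conjI ballI)
  show "a \<in> X \<rightarrow> Y" using assms(3) unfolding continuous_map_def ut_topspace[OF assms(1)]
      ut_topspace[OF assms(2)] Pi_iff by blast
  fix x E assume x: "x \<in> X" and E: "E \<in> \<Psi>"
  have ax: "a x \<in> Y" using \<open>a \<in> X \<rightarrow> Y\<close> x by (rule funcset_mem)
  obtain U where U: "openin (uniform_topology Y \<Psi>) U" "a x \<in> U" "U \<subseteq> E `` {a x}"
    using ut_nbhd[OF assms(2) ax E] by blast
  have "openin (uniform_topology X \<Phi>) {z \<in> X. a z \<in> U}"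
    using assms(3) U(1) unfolding continuous_map_def ut_topspace[OF assms(1)] by blast
  then obtain D where "D \<in> \<Phi>" "D `` {x} \<subseteq> {z \<in> X. a z \<in> U}"
    using x U(2) unfolding ut_open[OF assms(1)] by blast
  then show "\<exists>D\<in>\<Phi>. \<forall>y\<in>X. (x, y) \<in> D \<longrightarrow> (a x, a y) \<in> E" using U(3) by blast
qed

lemma ucont_pcont: "unif_continuous X \<Phi> Y \<Psi> a \<Longrightarrow> pcont X \<Phi> Y \<Psi> a"
  unfolding unif_continuous_def pcont_def by fast

lemma pcont_comp:
  assumes "pcont X \<Phi> Y \<Psi> a" "pcont Y \<Psi> Z \<Xi> b"
  shows "pcont X \<Phi> Z \<Xi> (\<lambda>x. b (a x))"
  unfolding pcont_def
proof (intro conjI ballI)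
  show "(\<lambda>x. b (a x)) \<in> X \<rightarrow> Z" using assms unfolding pcont_def Pi_iff by blast
  fix x E assume x: "x \<in> X" and E: "E \<in> \<Xi>"
  have ax: "a x \<in> Y" using assms x unfolding pcont_def Pi_iff by blast
  obtain D1 where D1: "D1 \<in> \<Psi>" "\<forall>y\<in>Y. (a x, y) \<in> D1 \<longrightarrow> (b (a x), b y) \<in> E"
    using assms(2) ax E unfolding pcont_def by blast
  obtain D where D: "D \<in> \<Phi>" "\<forall>y\<in>X. (x, y) \<in> D \<longrightarrow> (a x, a y) \<in> D1"
    using assms(1) x D1(1) unfolding pcont_def by blast
  show "\<exists>D\<in>\<Phi>. \<forall>y\<in>X. (x, y) \<in> D \<longrightarrow> (b (a x), b (a y)) \<in> E"
  proof (intro bexI[OF _ D(1)] ballI impI)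
    fix y assume "y \<in> X" "(x, y) \<in> D"
    moreover have "a y \<in> Y" using assms(1) \<open>y \<in> X\<close> unfolding pcont_def Pi_iff by blast
    ultimately show "(b (a x), b (a y)) \<in> E" using D(2) D1(2) by blast
  qed
qed

lemma pcont_agree:
  assumes X: "uniformity_on X \<Phi>" and Y: "uniformity_on Y \<Psi>" and H: "uniform_hausdorff Y \<Psi>"
    and dense: "\<forall>x\<in>X. \<forall>E\<in>\<Phi>. \<exists>s\<in>S. (x, s) \<in> E" and "S \<subseteq> X"
    and a: "pcont X \<Phi> Y \<Psi> a" and b: "pcont X \<Phi> Y \<Psi> b" and eq: "\<forall>s\<in>S. a s = b s"
    and x: "x \<in> X"
  shows "a x = b x"
proof -
  have "(a x, b x) \<in> E" if E: "E \<in> \<Psi>" for E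
  proof -
    obtain E1 where E1: "E1 \<in> \<Psi>" "\<forall>p q r. (p,q) \<in> E1 \<longrightarrow> (q,r) \<in> E1 \<longrightarrow> (p,r) \<in> E"
      "\<forall>p q. (p,q) \<in> E1 \<longrightarrow> (q,p) \<in> E1"
      using u_half_sym[OF Y E] by blast
    obtain Da where Da: "Da \<in> \<Phi>" "\<forall>y\<in>X. (x, y) \<in> Da \<longrightarrow> (a x, a y) \<in> E1"
      using a x E1(1) unfolding pcont_def by blast
    obtain Db where Db: "Db \<in> \<Phi>" "\<forall>y\<in>X. (x, y) \<in> Db \<longrightarrow> (b x, b y) \<in> E1"
      using b x E1(1) unfolding pcont_def by blast
    obtain s where s: "s \<in> S" "(x, s) \<in> Da \<inter> Db"
      using dense x u_int[OF X Da(1) Db(1)] by blast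
    have "s \<in> X" using s \<open>S \<subseteq> X\<close> by blast
    then have "(a x, a s) \<in> E1" "(b s, b x) \<in> E1" using Da Db s E1(3) by auto
    then show ?thesis using eq s(1) E1(2) by metis
  qed
  moreover have "a x \<in> Y" "b x \<in> Y" using a b x unfolding pcont_def Pi_iff by blast+
  ultimately show ?thesis using H unfolding uniform_hausdorff_def by blast
qed

lemma extension:
  assumes X: "uniformity_on X \<Phi>" and Y: "uniformity_on Y \<Psi>" and H: "uniform_hausdorff Y \<Psi>"
    and C: "unif_complete Y \<Psi>"
    and dense: "\<forall>x\<in>X. \<forall>E\<in>\<Phi>. \<exists>s\<in>S. (x, s) \<in> E" and SX: "S \<subseteq> X"
    and uc0: "unif_continuous S (subspace_uniformity S \<Phi>) Y \<Psi> \<phi>"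
  shows "\<exists>\<psi>. unif_continuous X \<Phi> Y \<Psi> \<psi> \<and> (\<forall>s\<in>S. \<psi> s = \<phi> s)"
proof -
  have phiF: "\<phi> \<in> S \<rightarrow> Y" using uc0 unfolding unif_continuous_def by (rule conjunct1)
  have phiY: "\<phi> s \<in> Y" if "s \<in> S" for s using phiF that by (rule funcset_mem)
  have uc1: "\<forall>E\<in>\<Psi>. \<exists>D\<in>subspace_uniformity S \<Phi>. \<forall>(x, y)\<in>D. (\<phi> x, \<phi> y) \<in> E"
    using uc0 unfolding unif_continuous_def by (rule conjunct2)
  have uc: "\<exists>D\<in>\<Phi>. \<forall>s t. s \<in> S \<longrightarrow> t \<in> S \<longrightarrow> (s, t) \<in> D \<longrightarrow> (\<phi> s, \<phi> t) \<in> E" if "E \<in> \<Psi>" for E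
  proof -
    from bspec[OF uc1 that] obtain D' where D': "D' \<in> subspace_uniformity S \<Phi>" "\<forall>(x, y)\<in>D'. (\<phi> x, \<phi> y) \<in> E"
      ..
    then obtain D where D: "D \<in> \<Phi>" "D' = D \<inter> (S \<times> S)" unfolding subspace_uniformity_def by blast
    have "(\<phi> s, \<phi> t) \<in> E" if "s \<in> S" "t \<in> S" "(s, t) \<in> D" for s t
    proof -
      have "(s, t) \<in> D'" using D(2) that by blast
      from bspec[OF D'(2) this] show ?thesis by simp
    qed
    then show ?thesis using D(1) by blast
  qed
  define Lim where "Lim x y \<longleftrightarrow> y \<in> Y \<and> (\<forall>E\<in>\<Psi>. \<exists>D\<in>\<Phi>. \<forall>s\<in>S. (x, s) \<in> D \<longrightarrow> (y, \<phi> s) \<in> E)" for x y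
  have ex: "\<exists>y. Lim x y" if x: "x \<in> X" for x
  proof -
    define Fp where "Fp P \<longleftrightarrow> (\<exists>D\<in>\<Phi>. \<forall>s\<in>S. (x, s) \<in> D \<longrightarrow> P (\<phi> s))" for P
    have isf: "is_filter Fp"
      unfolding is_filter_def
    proof (intro conjI allI impI)
      show "Fp (\<lambda>x. True)" unfolding Fp_def using u_top[OF X] by blast
    next
      fix P Q assume "Fp P" "Fp Q"
      then obtain D1 D2 where "D1 \<in> \<Phi>" "\<forall>s\<in>S. (x, s) \<in> D1 \<longrightarrow> P (\<phi> s)"
        "D2 \<in> \<Phi>" "\<forall>s\<in>S. (x, s) \<in> D2 \<longrightarrow> Q (\<phi> s)" unfolding Fp_def by blast
      then show "Fp (\<lambda>x. P x \<and> Q x)" unfolding Fp_def using u_int[OF X]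
        by (intro bexI[of _ "D1 \<inter> D2"]) auto
    next
      fix P Q assume "\<forall>x. P x \<longrightarrow> Q x" "Fp P"
      then show "Fp Q" unfolding Fp_def by blast
    qed
    define F where "F = Abs_filter Fp"
    have evF: "eventually P F \<longleftrightarrow> Fp P" for P unfolding F_def using eventually_Abs_filter[OF isf] .
    have "F \<noteq> bot"
    proof
      assume "F = bot"
      then have "Fp (\<lambda>_. False)" using evF by (metis eventually_bot)
      then obtain D where "D \<in> \<Phi>" "\<forall>s\<in>S. (x, s) \<notin> D" unfolding Fp_def by blast
      then show False using dense x by blast
    qed
    moreover have "eventually (\<lambda>y. y \<in> Y) F" unfolding evF Fp_def using u_top[OF X] phiY by blast
    moreover have "\<forall>E\<in>\<Psi>. \<exists>P. eventually P F \<and> (\<forall>y z. P y \<and> P z \<longrightarrow> (y, z) \<in> E)"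
    proof
      fix E assume E: "E \<in> \<Psi>"
      obtain D where D: "D \<in> \<Phi>" "\<forall>s t. s \<in> S \<longrightarrow> t \<in> S \<longrightarrow> (s, t) \<in> D \<longrightarrow> (\<phi> s, \<phi> t) \<in> E"
        using uc[OF E] by blast
      obtain D1 where D1: "D1 \<in> \<Phi>" "\<forall>a b c. (a,b) \<in> D1 \<longrightarrow> (b,c) \<in> D1 \<longrightarrow> (a,c) \<in> D"
        "\<forall>a b. (a,b) \<in> D1 \<longrightarrow> (b,a) \<in> D1"
        using u_half_sym[OF X D(1)] by blast
      define P where "P z \<longleftrightarrow> (\<exists>s\<in>S. (x, s) \<in> D1 \<and> z = \<phi> s)" for z
      have "eventually P F" unfolding evF Fp_def P_def using D1(1) by blast
      moreover have "\<forall>y z. P y \<and> P z \<longrightarrow> (y, z) \<in> E"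
      proof (intro allI impI)
        fix y z assume yz: "P y \<and> P z"
        obtain s where s: "s \<in> S" "(x, s) \<in> D1" "y = \<phi> s" using yz unfolding P_def by blast
        obtain t where t: "t \<in> S" "(x, t) \<in> D1" "z = \<phi> t" using yz unfolding P_def by blast
        have "(s, x) \<in> D1" using D1(3) s(2) by blast
        then have "(s, t) \<in> D" using D1(2) t(2) by blast
        then show "(y, z) \<in> E" using D(2) s t by blast
      qed
      ultimately show "\<exists>P. eventually P F \<and> (\<forall>y z. P y \<and> P z \<longrightarrow> (y, z) \<in> E)" by blast
    qed
    ultimately obtain y where "y \<in> Y" "\<forall>E\<in>\<Psi>. eventually (\<lambda>z. (y, z) \<in> E) F"
      using C unfolding unif_complete_def by blast
    then have "Lim x y" unfolding Lim_def evF Fp_def by blast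
    then show ?thesis by blast
  qed
  have uniq: "y = y'" if "Lim x y" "Lim x y'" "x \<in> X" for x y y'
  proof -
    have "(y, y') \<in> E" if E: "E \<in> \<Psi>" for E
    proof -
      obtain E1 where E1: "E1 \<in> \<Psi>" "\<forall>p q r. (p,q) \<in> E1 \<longrightarrow> (q,r) \<in> E1 \<longrightarrow> (p,r) \<in> E"
        "\<forall>p q. (p,q) \<in> E1 \<longrightarrow> (q,p) \<in> E1"
        using u_half_sym[OF Y E] by blast
      obtain D where D: "D \<in> \<Phi>" "\<forall>s\<in>S. (x, s) \<in> D \<longrightarrow> (y, \<phi> s) \<in> E1"
        using \<open>Lim x y\<close> E1(1) unfolding Lim_def by blast
      obtain D' where D': "D' \<in> \<Phi>" "\<forall>s\<in>S. (x, s) \<in> D' \<longrightarrow> (y', \<phi> s) \<in> E1"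
        using \<open>Lim x y'\<close> E1(1) unfolding Lim_def by blast
      obtain s where s: "s \<in> S" "(x, s) \<in> D \<inter> D'" using dense \<open>x \<in> X\<close> u_int[OF X D(1) D'(1)] by blast
      have "(y, \<phi> s) \<in> E1" using D(2) s by blast
      moreover have "(\<phi> s, y') \<in> E1" using D'(2) s E1(3) by blast
      ultimately show ?thesis using E1(2) by blast
    qed
    moreover have "y \<in> Y" "y' \<in> Y" using that unfolding Lim_def by blast+
    ultimately show ?thesis using H unfolding uniform_hausdorff_def by blast
  qed
  have onS: "Lim s0 (\<phi> s0)" if "s0 \<in> S" for s0
    unfolding Lim_def
  proof (intro conjI ballI)
    show "\<phi> s0 \<in> Y" using phiY that .
    fix E assume "E \<in> \<Psi>"
    then obtain D where "D \<in> \<Phi>" "\<forall>s t. s \<in> S \<longrightarrow> t \<in> S \<longrightarrow> (s, t) \<in> D \<longrightarrow> (\<phi> s, \<phi> t) \<in> E"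
      using uc by blast
    then show "\<exists>D\<in>\<Phi>. \<forall>s\<in>S. (s0, s) \<in> D \<longrightarrow> (\<phi> s0, \<phi> s) \<in> E" using that by blast
  qed
  define \<psi> where "\<psi> x = (SOME y. Lim x y)" for x
  have L: "Lim x (\<psi> x)" if "x \<in> X" for x unfolding \<psi>_def using ex[OF that] by (rule someI_ex)
  have agree: "\<forall>s\<in>S. \<psi> s = \<phi> s" using uniq L onS SX by blast
  have "unif_continuous X \<Phi> Y \<Psi> \<psi>"
    unfolding unif_continuous_def
  proof (intro conjI ballI)
    show "\<psi> \<in> X \<rightarrow> Y" using L unfolding Lim_def Pi_iff by blast
    fix E assume E: "E \<in> \<Psi>"
    obtain E1 where E1: "E1 \<in> \<Psi>" "\<forall>a b c d. (a,b) \<in> E1 \<longrightarrow> (b,c) \<in> E1 \<longrightarrow> (c,d) \<in> E1 \<longrightarrow> (a,d) \<in> E"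
      "\<forall>a b. (a,b) \<in> E1 \<longrightarrow> (b,a) \<in> E1"
      using u_third_sym[OF Y E] by blast
    obtain D where D: "D \<in> \<Phi>" "\<forall>s t. s \<in> S \<longrightarrow> t \<in> S \<longrightarrow> (s, t) \<in> D \<longrightarrow> (\<phi> s, \<phi> t) \<in> E1"
      using uc[OF E1(1)] by blast
    obtain D1 where D1: "D1 \<in> \<Phi>" "\<forall>a b c d. (a,b) \<in> D1 \<longrightarrow> (b,c) \<in> D1 \<longrightarrow> (c,d) \<in> D1 \<longrightarrow> (a,d) \<in> D"
      "\<forall>a b. (a,b) \<in> D1 \<longrightarrow> (b,a) \<in> D1"
      using u_third_sym[OF X D(1)] by blast
    have "(\<psi> x, \<psi> x') \<in> E" if xx: "(x, x') \<in> D1" for x x'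
    proof -
      have x: "x \<in> X" "x' \<in> X" using xx u_sub[OF X D1(1)] by blast+
      obtain Dx where Dx: "Dx \<in> \<Phi>" "\<forall>s\<in>S. (x, s) \<in> Dx \<longrightarrow> (\<psi> x, \<phi> s) \<in> E1"
        using L[OF x(1)] E1(1) unfolding Lim_def by blast
      obtain Dx' where Dx': "Dx' \<in> \<Phi>" "\<forall>s\<in>S. (x', s) \<in> Dx' \<longrightarrow> (\<psi> x', \<phi> s) \<in> E1"
        using L[OF x(2)] E1(1) unfolding Lim_def by blast
      obtain s where s: "s \<in> S" "(x, s) \<in> D1 \<inter> Dx" using dense x(1) u_int[OF X D1(1) Dx(1)] by blast
      obtain t where t: "t \<in> S" "(x', t) \<in> D1 \<inter> Dx'" using dense x(2) u_int[OF X D1(1) Dx'(1)] by blast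
      have "(s, x) \<in> D1" using D1(3) s(2) by blast
      then have "(s, t) \<in> D" using D1(2) t(2) xx by blast
      then have 1: "(\<phi> s, \<phi> t) \<in> E1" using D(2) s t by blast
      have 2: "(\<psi> x, \<phi> s) \<in> E1" using Dx s by blast
      have 3: "(\<phi> t, \<psi> x') \<in> E1" using Dx' t E1(3) by blast
      show ?thesis using E1(2) 1 2 3 by meson
    qed
    then show "\<exists>D\<in>\<Phi>. \<forall>(x, y)\<in>D. (\<psi> x, \<psi> y) \<in> E" using D1(1) by blast
  qed
  then show ?thesis using agree by blast
qed

theorem lemma2p28:
  fixes B :: "('o, 'm) site_basis"
    and F F' :: "('m, 'o, 'a) upresheaf"
    and G :: "('m, 'o, 'b) upresheaf"
    and f :: "'o \<Rightarrow> 'a \<Rightarrow> 'b"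
  assumes "wf_site_basis B"
    and "uniform_sheaf B F"
    and "uniform_sheaf B G"
    and "dense_subsheaf B F' F"
    and "complete_sheaf B G"
    and "unif_cont_morphism B F' G f"
  shows "\<exists>g. unif_cont_morphism B F G g \<and>
             (\<forall>V\<in>sb_obj B. \<forall>x\<in>ps_carr F' V. g V x = f V x) \<and>
             (\<forall>h. unif_cont_morphism B F G h \<and> (\<forall>V\<in>sb_obj B. \<forall>x\<in>ps_carr F' V. h V x = f V x)
                  \<longrightarrow> (\<forall>V\<in>sb_obj B. \<forall>x\<in>ps_carr F V. h V x = g V x))"
proof -
  have w1: "\<forall>m\<in>sb_mor B. sb_dom B m \<in> sb_obj B \<and> sb_cod B m \<in> sb_obj B"
    using assms(1) unfolding wf_site_basis_def by (elim conjE)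
  have sF1: "\<forall>V\<in>sb_obj B. uniformity_on (ps_carr F V) (ps_unif F V) \<and> uniform_hausdorff (ps_carr F V) (ps_unif F V)"
    using assms(2) unfolding uniform_sheaf_def by (elim conjE)
  have sF2: "\<forall>m\<in>sb_mor B. continuous_map (ps_top F (sb_cod B m)) (ps_top F (sb_dom B m)) (ps_res F m)"
    using assms(2) unfolding uniform_sheaf_def by (elim conjE)
  have sG1: "\<forall>V\<in>sb_obj B. uniformity_on (ps_carr G V) (ps_unif G V) \<and> uniform_hausdorff (ps_carr G V) (ps_unif G V)"
    using assms(3) unfolding uniform_sheaf_def by (elim conjE)
  have sG2: "\<forall>m\<in>sb_mor B. continuous_map (ps_top G (sb_cod B m)) (ps_top G (sb_dom B m)) (ps_res G m)"
    using assms(3) unfolding uniform_sheaf_def by (elim conjE)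
  have sF': "uniform_sheaf B F'" using assms(4) unfolding dense_subsheaf_def by (elim conjE)
  have sF'1: "\<forall>V\<in>sb_obj B. uniformity_on (ps_carr F' V) (ps_unif F' V) \<and> uniform_hausdorff (ps_carr F' V) (ps_unif F' V)"
    using sF' unfolding uniform_sheaf_def by (elim conjE)
  have sF'2: "\<forall>m\<in>sb_mor B. continuous_map (ps_top F' (sb_cod B m)) (ps_top F' (sb_dom B m)) (ps_res F' m)"
    using sF' unfolding uniform_sheaf_def by (elim conjE)
  have d2: "\<forall>V\<in>sb_obj B. ps_carr F' V \<subseteq> ps_carr F V \<and>
        ps_unif F' V = subspace_uniformity (ps_carr F' V) (ps_unif F V) \<and>
        ps_top F V closure_of ps_carr F' V = ps_carr F V"
    using assms(4) unfolding dense_subsheaf_def by (elim conjE)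
  have d3: "\<forall>m\<in>sb_mor B. \<forall>x\<in>ps_carr F' (sb_cod B m). ps_res F' m x = ps_res F m x"
    using assms(4) unfolding dense_subsheaf_def by (elim conjE)
  have cG: "\<forall>V\<in>sb_obj B. unif_complete (ps_carr G V) (ps_unif G V)"
    using assms(5) unfolding complete_sheaf_def .
  have m1: "\<forall>V\<in>sb_obj B. unif_continuous (ps_carr F' V) (ps_unif F' V) (ps_carr G V) (ps_unif G V) (f V)"
    using assms(6) unfolding unif_cont_morphism_def by (elim conjE)
  have m2: "\<forall>m\<in>sb_mor B. \<forall>x\<in>ps_carr F' (sb_cod B m).
        f (sb_dom B m) (ps_res F' m x) = ps_res G m (f (sb_cod B m) x)"
    using assms(6) unfolding unif_cont_morphism_def by (elim conjE)

  have UF: "uniformity_on (ps_carr F V) (ps_unif F V)" if "V \<in> sb_obj B" for V using sF1 that by blast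
  have UF': "uniformity_on (ps_carr F' V) (ps_unif F' V)" if "V \<in> sb_obj B" for V using sF'1 that by blast
  have UG: "uniformity_on (ps_carr G V) (ps_unif G V)" if "V \<in> sb_obj B" for V using sG1 that by blast
  have HG: "uniform_hausdorff (ps_carr G V) (ps_unif G V)" if "V \<in> sb_obj B" for V using sG1 that by blast
  have sub: "ps_carr F' V \<subseteq> ps_carr F V" if "V \<in> sb_obj B" for V using d2 that by blast
  have dense: "\<forall>x\<in>ps_carr F V. \<forall>E\<in>ps_unif F V. \<exists>s\<in>ps_carr F' V. (x, s) \<in> E" if V: "V \<in> sb_obj B" for V
  proof (intro ballI)
    fix x E assume "x \<in> ps_carr F V" "E \<in> ps_unif F V"
    moreover have "uniform_topology (ps_carr F V) (ps_unif F V) closure_of ps_carr F' V = ps_carr F V"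
      using d2 V unfolding ps_top_def by blast
    ultimately show "\<exists>s\<in>ps_carr F' V. (x, s) \<in> E" using ut_dense[OF UF[OF V]] by blast
  qed
  have fuc: "unif_continuous (ps_carr F' V) (subspace_uniformity (ps_carr F' V) (ps_unif F V)) (ps_carr G V) (ps_unif G V) (f V)"
    if V: "V \<in> sb_obj B" for V
  proof -
    have "ps_unif F' V = subspace_uniformity (ps_carr F' V) (ps_unif F V)" using d2 V by blast
    then show ?thesis using m1 V by metis
  qed
  have "\<forall>V. \<exists>\<psi>. V \<in> sb_obj B \<longrightarrow> unif_continuous (ps_carr F V) (ps_unif F V) (ps_carr G V) (ps_unif G V) \<psi>
      \<and> (\<forall>s\<in>ps_carr F' V. \<psi> s = f V s)"
  proof
    fix V
    show "\<exists>\<psi>. V \<in> sb_obj B \<longrightarrow> unif_continuous (ps_carr F V) (ps_unif F V) (ps_carr G V) (ps_unif G V) \<psi>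
      \<and> (\<forall>s\<in>ps_carr F' V. \<psi> s = f V s)"
    proof (cases "V \<in> sb_obj B")
      case True
      have "unif_complete (ps_carr G V) (ps_unif G V)" using cG True by blast
      from extension[OF UF[OF True] UG[OF True] HG[OF True] this dense[OF True] sub[OF True] fuc[OF True]]
      show ?thesis by blast
    qed blast
  qed
  then obtain g where g: "\<And>V. V \<in> sb_obj B \<Longrightarrow> unif_continuous (ps_carr F V) (ps_unif F V) (ps_carr G V) (ps_unif G V) (g V)"
      "\<And>V. V \<in> sb_obj B \<Longrightarrow> \<forall>s\<in>ps_carr F' V. g V s = f V s"
    by metis

  have pres: "pcont (ps_carr F (sb_cod B m)) (ps_unif F (sb_cod B m)) (ps_carr F (sb_dom B m)) (ps_unif F (sb_dom B m)) (ps_res F m)"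
    if m: "m \<in> sb_mor B" for m
    using ut_cont[OF UF UF] sF2 m w1 unfolding ps_top_def by blast
  have pres': "pcont (ps_carr F' (sb_cod B m)) (ps_unif F' (sb_cod B m)) (ps_carr F' (sb_dom B m)) (ps_unif F' (sb_dom B m)) (ps_res F' m)"
    if m: "m \<in> sb_mor B" for m
    using ut_cont[OF UF' UF'] sF'2 m w1 unfolding ps_top_def by blast
  have gres: "pcont (ps_carr G (sb_cod B m)) (ps_unif G (sb_cod B m)) (ps_carr G (sb_dom B m)) (ps_unif G (sb_dom B m)) (ps_res G m)"
    if m: "m \<in> sb_mor B" for m
    using ut_cont[OF UG UG] sG2 m w1 unfolding ps_top_def by blast

  have gm: "unif_cont_morphism B F G g"
    unfolding unif_cont_morphism_def
  proof (intro conjI ballI)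
    fix V assume "V \<in> sb_obj B" then show "unif_continuous (ps_carr F V) (ps_unif F V) (ps_carr G V) (ps_unif G V) (g V)"
      by (rule g(1))
  next
    fix m x assume m: "m \<in> sb_mor B" and x: "x \<in> ps_carr F (sb_cod B m)"
    let ?U = "sb_dom B m"
    let ?W = "sb_cod B m"
    have Uo: "?U \<in> sb_obj B" and Wo: "?W \<in> sb_obj B" using w1 m by blast+
    have pa: "pcont (ps_carr F ?W) (ps_unif F ?W) (ps_carr G ?U) (ps_unif G ?U) (\<lambda>x. g ?U (ps_res F m x))"
      using pcont_comp[OF pres[OF m] ucont_pcont[OF g(1)[OF Uo]]] .
    have pb: "pcont (ps_carr F ?W) (ps_unif F ?W) (ps_carr G ?U) (ps_unif G ?U) (\<lambda>x. ps_res G m (g ?W x))"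
      using pcont_comp[OF ucont_pcont[OF g(1)[OF Wo]] gres[OF m]] .
    have eq: "\<forall>s\<in>ps_carr F' ?W. g ?U (ps_res F m s) = ps_res G m (g ?W s)"
    proof
      fix s assume s: "s \<in> ps_carr F' ?W"
      have r: "ps_res F m s = ps_res F' m s" using bspec[OF bspec[OF d3 m] s] by simp
      have "ps_res F' m s \<in> ps_carr F' ?U" using pres'[OF m] s unfolding pcont_def Pi_iff by blast
      then have "g ?U (ps_res F' m s) = f ?U (ps_res F' m s)" using g(2)[OF Uo] by blast
      also have "\<dots> = ps_res G m (f ?W s)" using m2 m s by blast
      also have "\<dots> = ps_res G m (g ?W s)" using g(2)[OF Wo] s by simp
      finally show "g ?U (ps_res F m s) = ps_res G m (g ?W s)" using r by simp
    qed
    have "g ?U (ps_res F m x) = ps_res G m (g ?W x)"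
      using pcont_agree[OF UF[OF Wo] UG[OF Uo] HG[OF Uo] dense[OF Wo] sub[OF Wo] pa pb eq] x
      by blast
    then show "g (sb_dom B m) (ps_res F m x) = ps_res G m (g (sb_cod B m) x)" .
  qed
  have uniq: "\<forall>V\<in>sb_obj B. \<forall>x\<in>ps_carr F V. h V x = g V x"
    if h: "unif_cont_morphism B F G h" "\<forall>V\<in>sb_obj B. \<forall>x\<in>ps_carr F' V. h V x = f V x" for h
  proof (intro ballI)
    fix V x assume V: "V \<in> sb_obj B" and x: "x \<in> ps_carr F V"
    have hu: "unif_continuous (ps_carr F V) (ps_unif F V) (ps_carr G V) (ps_unif G V) (h V)"
      using h(1) V unfolding unif_cont_morphism_def by blast
    have "\<forall>s\<in>ps_carr F' V. h V s = g V s" using h(2) g(2)[OF V] V by simp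
    then show "h V x = g V x"
      using pcont_agree[OF UF[OF V] UG[OF V] HG[OF V] dense[OF V] sub[OF V] ucont_pcont[OF hu] ucont_pcont[OF g(1)[OF V]]] x
      by blast
  qed
  show ?thesis using gm g(2) uniq by blast
qed

end
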